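(* Fix a countable collection of languages $\mathcal{L}$, $c\in(0,1]$ and $\rho\in(0,1]$. Under enumerations with constant noise rate $c$ and arbitrary omissions, there exists a set-based generator that generates in the limit from $\mathcal{L}$ and achieves set-based lower density $\rho$ if and only if the following holds: for every non-empty finite subcollection $\mathcal{L}'\subseteq\mathcal{L}$ and every enumeration $x_{1:\infty}$, either (a) there exists $L'\in\mathcal{L}'$ with $R(L';x_{1:n})>c$ for infinitely many $n$, or (b) every $L\in\mathcal{L}'$ satisfies $\mu_{\rm low}\big(\bigcap_{L''\in\mathcal{L}'}L'',\,L\big)\ge\rho$.
   Context: The universe is $U=\mathbb{N}$ with its natural order. A language is an infinite subset of $U$; a collection is a countable family of languages. For $A,B\subseteq\mathbb{N}$ with $B=\{b_1<b_2<\cdots\}$, $\mu_{\rm low}(A,B)=\liminf_n\frac1n|A\cap\{b_1,\dots,b_n\}|$. An enumeration is a sequence of distinct elements of $U$; $S_n=\{x_1,\dots,x_n\}$; the empirical noise rate is $R(L;x_{1:n})=\frac1n|\{t\le n:x_t\notin L\}|$. An enumeration of $K$ with $c$-noise and arbitrary omissions is a sequence in which every element of some infinite $\hat K\subseteq K$ appears exactly once and $R(\hat K;x_{1:n})\le c$ for all sufficiently large $n$. A set-based generator is a sequence of maps that, given $x_1,\dots,x_n$ (and knowledge of $\mathcal{L}$, not of $K$), outputs $A_n\subseteq U\setminus S_n$. It generates in the limit if for every $K\in\mathcal{L}$ and admissible enumeration of $K$ there is $n^\star$ with $A_n\subseteq K$ for all $n\ge n^\star$; it achieves set-based lower density $\rho$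 if $\liminf_n\mu_{\rm low}(A_n,K)\ge\rho$ for every such $K$ and enumeration. *)

theory Defs
  imports Main "HOL-Library.Countable_Set" "HOL-Library.Infinite_Set" "HOL-Library.Extended_Real"
begin

text \<open>Universe U = nat. Enumerations are 0-indexed: x 0, x 1, ... stands for x_1, x_2, ...;
  the prefix x_{1:n} is x 0, ..., x (n-1).\<close>

definition language :: "nat set \<Rightarrow> bool" where
  "language L \<longleftrightarrow> infinite L"

definition collection :: "nat set set \<Rightarrow> bool" where
  "collection Lc \<longleftrightarrow> countable Lc \<and> (\<forall>L\<in>Lc. language L)"

definition enumeration :: "(nat \<Rightarrow> nat) \<Rightarrow> bool" where
  "enumeration x \<longleftrightarrow> inj x"

definition prefix_set :: "(nat \<Rightarrow> nat) \<Rightarrow> nat \<Rightarrow> nat set" where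
  "prefix_set x n = x ` {..<n}"

definition noise_rate :: "nat set \<Rightarrow> (nat \<Rightarrow> nat) \<Rightarrow> nat \<Rightarrow> real" where
  "noise_rate L x n = real (card {t. t < n \<and> x t \<notin> L}) / real n"

text \<open>Lower density of A in B = {b_1 < b_2 < ...} (B infinite); enumerate B i = b_{i+1}.\<close>
definition mu_low :: "nat set \<Rightarrow> nat set \<Rightarrow> ereal" where
  "mu_low A B = liminf (\<lambda>n. ereal (real (card (A \<inter> enumerate B ` {..<n})) / real n))"

definition noisy_enum :: "real \<Rightarrow> nat set \<Rightarrow> (nat \<Rightarrow> nat) \<Rightarrow> bool" where
  "noisy_enum c K x \<longleftrightarrow> enumeration x \<and>
     (\<exists>Kh. Kh \<subseteq> K \<and> infinite Kh \<and> Kh \<subseteq> range x \<and>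
        (\<forall>\<^sub>F n in sequentially. noise_rate Kh x n \<le> c))"

definition set_generator :: "(nat list \<Rightarrow> nat set) \<Rightarrow> bool" where
  "set_generator G \<longleftrightarrow> (\<forall>xs. G xs \<inter> set xs = {})"

definition gen_out :: "(nat list \<Rightarrow> nat set) \<Rightarrow> (nat \<Rightarrow> nat) \<Rightarrow> nat \<Rightarrow> nat set" where
  "gen_out G x n = G (map x [0..<n])"

definition generates_in_limit :: "nat set set \<Rightarrow> real \<Rightarrow> (nat list \<Rightarrow> nat set) \<Rightarrow> bool" where
  "generates_in_limit Lc c G \<longleftrightarrow>
     (\<forall>K\<in>Lc. \<forall>x. noisy_enum c K x \<longrightarrow> (\<exists>n0. \<forall>n\<ge>n0. gen_out G x n \<subseteq> K))"

definition achieves_lower_density :: "nat set set \<Rightarrow> real \<Rightarrow> real \<Rightarrow> (nat list \<Rightarrow> nat set) \<Rightarrow> bool" where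
  "achieves_lower_density Lc c \<rho> G \<longleftrightarrow>
     (\<forall>K\<in>Lc. \<forall>x. noisy_enum c K x \<longrightarrow> ereal \<rho> \<le> liminf (\<lambda>n. mu_low (gen_out G x n) K))"

end

theory Submission
  imports Defs "HOL-Analysis.Extended_Real_Limits"
begin

lemma mu_low_mono:
  assumes "A \<subseteq> A'" shows "mu_low A B \<le> mu_low A' B"
  unfolding mu_low_def
proof (rule Liminf_mono, rule always_eventually, rule allI)
  fix n
  have "card (A \<inter> enumerate B ` {..<n}) \<le> card (A' \<inter> enumerate B ` {..<n})"
    by (rule card_mono) (use assms in auto)
  then show "ereal (real (card (A \<inter> enumerate B ` {..<n})) / real n)
     \<le> ereal (real (card (A' \<inter> enumerate B ` {..<n})) / real n)"
    by (simp add: divide_right_mono)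
qed

lemma mu_low_diff_finite:
  assumes "finite F" shows "mu_low A B \<le> mu_low (A - F) B"
proof -
  let ?u = "\<lambda>n. ereal (real (card F) / real n)"
  let ?v = "\<lambda>n. ereal (real (card ((A - F) \<inter> enumerate B ` {..<n})) / real n)"
  have u: "?u \<longlonglongrightarrow> ereal 0"
    unfolding lim_ereal by (rule lim_const_over_n)
  have "mu_low A B \<le> liminf (\<lambda>n. ?u n + ?v n)"
    unfolding mu_low_def
  proof (rule Liminf_mono, rule always_eventually, rule allI)
    fix n
    have "A \<inter> enumerate B ` {..<n} \<subseteq> ((A - F) \<inter> enumerate B ` {..<n}) \<union> F" by auto
    then have "card (A \<inter> enumerate B ` {..<n}) \<le> card (((A - F) \<inter> enumerate B ` {..<n}) \<union> F)"
      by (rule card_mono[rotated]) (use assms in auto)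
    also have "\<dots> \<le> card ((A - F) \<inter> enumerate B ` {..<n}) + card F" by (rule card_Un_le)
    finally have "real (card (A \<inter> enumerate B ` {..<n})) \<le> real (card F) + real (card ((A - F) \<inter> enumerate B ` {..<n}))"
      by linarith
    then have "real (card (A \<inter> enumerate B ` {..<n})) / real n \<le> real (card F) / real n + real (card ((A - F) \<inter> enumerate B ` {..<n})) / real n"
      by (simp add: add_divide_distrib[symmetric] divide_right_mono)
    then show "ereal (real (card (A \<inter> enumerate B ` {..<n})) / real n) \<le> ?u n + ?v n"
      by simp
  qed
  also have "\<dots> = ereal 0 + liminf ?v"
    by (rule ereal_liminf_lim_add[OF u]) simp
  finally show ?thesis unfolding mu_low_def by (simp add: zero_ereal_def[symmetric])
qed

lemma noise_rate_le1: "noise_rate L x n \<le> 1"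
proof -
  have "card {t. t < n \<and> x t \<notin> L} \<le> card {..<n}" by (rule card_mono) auto
  then show ?thesis unfolding noise_rate_def
    by (cases "n = 0") (auto simp: divide_le_eq_1)
qed

lemma noise_rate_cong:
  assumes "\<And>t. t < m \<Longrightarrow> y t = x t" shows "noise_rate L y m = noise_rate L x m"
  unfolding noise_rate_def using assms by (metis (mono_tags, lifting) Collect_cong)

lemma noise_rate_anti:
  assumes "Kh \<subseteq> K" shows "noise_rate K x n \<le> noise_rate Kh x n"
proof -
  have "card {t. t < n \<and> x t \<notin> K} \<le> card {t. t < n \<and> x t \<notin> Kh}"
    by (rule card_mono) (use assms in auto)
  then show ?thesis unfolding noise_rate_def by (simp add: divide_right_mono)
qed

lemma noisy_enum_consistent:
  assumes c1: "c < 1" and en: "enumeration x"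
    and ev: "\<forall>\<^sub>F n in sequentially. noise_rate La x n \<le> c"
  shows "noisy_enum c La x"
proof -
  have inj: "inj x" using en unfolding enumeration_def .
  have eqn: "noise_rate (La \<inter> range x) x n = noise_rate La x n" for n
  proof -
    have "{t. t < n \<and> x t \<notin> La \<inter> range x} = {t. t < n \<and> x t \<notin> La}" by auto
    then show ?thesis unfolding noise_rate_def by simp
  qed
  have inf: "infinite (La \<inter> range x)"
  proof
    assume fin: "finite (La \<inter> range x)"
    define k where "k = card (La \<inter> range x)"
    obtain N where N: "\<And>n. n \<ge> N \<Longrightarrow> noise_rate La x n \<le> c"
      using ev unfolding eventually_sequentially by blast
    obtain n :: nat where n: "n \<ge> N" "real n > real k / (1 - c)" "n > 0"
    proof -
      obtain m :: nat where "real m > real k / (1 - c)" using reals_Archimedean2 by blast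
      then show ?thesis by (intro that[of "max N (Suc m)"]) auto
    qed
    have hit: "card {t. t < n \<and> x t \<in> La} \<le> k"
    proof -
      have "card {t. t < n \<and> x t \<in> La} = card (x ` {t. t < n \<and> x t \<in> La})"
        by (rule card_image[symmetric]) (use inj in \<open>auto simp: inj_on_def\<close>)
      also have "\<dots> \<le> k" unfolding k_def by (rule card_mono[OF fin]) auto
      finally show ?thesis .
    qed
    have "{t. t < n \<and> x t \<notin> La} \<union> {t. t < n \<and> x t \<in> La} = {..<n}" by auto
    then have "card {t. t < n \<and> x t \<notin> La} + card {t. t < n \<and> x t \<in> La} = n"
      by (metis (no_types, lifting) card_Un_disjoint card_lessThan finite_Un finite_lessThan disjoint_iff mem_Collect_eq)
    then have miss: "real (card {t. t < n \<and> x t \<notin> La}) \<ge> real n - real k" using hit by linarith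
    have "real k < real n * (1 - c)" using n(2) c1 by (simp add: pos_divide_less_eq mult.commute)
    then have "c * real n < real n - real k" by (simp add: algebra_simps)
    also have "\<dots> \<le> real (card {t. t < n \<and> x t \<notin> La})" by (rule miss)
    finally have "c < noise_rate La x n" unfolding noise_rate_def using n(3)
      by (simp add: pos_less_divide_eq mult.commute)
    with N[OF n(1)] show False by simp
  qed
  show ?thesis unfolding noisy_enum_def
    using en inf ev by (auto simp: eqn)
qed

lemma noisy_enum_id:
  assumes "1 \<le> c" "infinite La" shows "noisy_enum c La id"
  unfolding noisy_enum_def enumeration_def using assms noise_rate_le1
  by (auto intro!: exI[of _ La] always_eventually order_trans[OF noise_rate_le1])

definition Bset :: "(nat \<Rightarrow> nat set) \<Rightarrow> real \<Rightarrow> (nat \<Rightarrow> nat) \<Rightarrow> nat \<Rightarrow> nat \<Rightarrow> nat set" where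
  "Bset f c y n t = {i. i \<le> t \<and> (\<forall>m. t \<le> m \<and> m \<le> n \<longrightarrow> noise_rate (f i) y m \<le> c)}"

definition goodt :: "(nat \<Rightarrow> nat set) \<Rightarrow> real \<Rightarrow> real \<Rightarrow> (nat \<Rightarrow> nat) \<Rightarrow> nat \<Rightarrow> nat \<Rightarrow> bool" where
  "goodt f c r y n t \<longleftrightarrow> (\<forall>i\<in>Bset f c y n t. ereal r \<le> mu_low (\<Inter>(f ` Bset f c y n t)) (f i))"

definition gen :: "(nat \<Rightarrow> nat set) \<Rightarrow> real \<Rightarrow> real \<Rightarrow> nat list \<Rightarrow> nat set" where
  "gen f c r xs = (let y = (\<lambda>t. xs ! t); n = length xs in
     \<Inter>(f ` Bset f c y n (Max {t. t \<le> n \<and> goodt f c r y n t})) - set xs)"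

lemma Bset_mono: "t \<le> t' \<Longrightarrow> Bset f c y n t \<subseteq> Bset f c y n t'"
  unfolding Bset_def by auto

lemma Bset_prefix: "Bset f c (\<lambda>t. map x [0..<n] ! t) n t = Bset f c x n t"
proof -
  have "noise_rate L (\<lambda>t. map x [0..<n] ! t) m = noise_rate L x m" if "m \<le> n" for L m
    by (rule noise_rate_cong) (use that in auto)
  then show ?thesis unfolding Bset_def by auto
qed

lemma gen_out_eq: "gen_out (gen f c r) x n =
   \<Inter>(f ` Bset f c x n (Max {t. t \<le> n \<and> goodt f c r x n t})) - x ` {..<n}"
  unfolding gen_out_def gen_def Let_def goodt_def by (simp add: Bset_prefix atLeast0LessThan)

lemma sufficiency:
  assumes fK: "K \<in> range f" and ne: "noisy_enum c K x" and r: "0 < r"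
    and cond: "\<forall>L'. L' \<subseteq> range f \<longrightarrow> finite L' \<longrightarrow> L' \<noteq> {} \<longrightarrow>
      (\<forall>x. enumeration x \<longrightarrow>
        (\<exists>La\<in>L'. \<exists>\<^sub>\<infinity>n. noise_rate La x n > c) \<or>
        (\<forall>L\<in>L'. mu_low (\<Inter>L') L \<ge> ereal r))"
  shows "\<exists>N. \<forall>n\<ge>N. gen_out (gen f c r) x n \<subseteq> K \<and> ereal r \<le> mu_low (gen_out (gen f c r) x n) K"
proof -
  obtain z where z: "f z = K" using fK by auto
  obtain Kh N0 where Kh: "Kh \<subseteq> K" and N0: "\<And>n. n \<ge> N0 \<Longrightarrow> noise_rate Kh x n \<le> c"
    and en: "enumeration x"
    using ne unfolding noisy_enum_def eventually_sequentially by blast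
  have NK: "noise_rate K x n \<le> c" if "n \<ge> N0" for n
    using noise_rate_anti[OF Kh, of x n] N0[OF that] by linarith
  define T where "T = max z N0"
  define F where "F = {i. i \<le> T \<and> (\<forall>m\<ge>T. noise_rate (f i) x m \<le> c)}"
  have zF: "z \<in> F" unfolding F_def T_def using NK z by auto
  have "\<forall>i\<in>{..T}-F. \<exists>m. T \<le> m \<and> noise_rate (f i) x m > c"
    unfolding F_def by (auto simp: not_le)
  then obtain M where M0: "\<forall>i\<in>{..T}-F. T \<le> M i \<and> noise_rate (f i) x (M i) > c"
    by (rule bchoice[elim_format]) blast
  have M: "T \<le> M i \<and> noise_rate (f i) x (M i) > c" if "i \<in> {..T}-F" for i
    using M0 that by blast
  define N1 where "N1 = Max (insert T (M ` ({..T}-F)))"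
  have N1T: "T \<le> N1" unfolding N1_def by simp
  have N1M: "M i \<le> N1" if "i \<in> {..T}-F" for i unfolding N1_def using that by simp
  have BF: "Bset f c x n T = F" if "n \<ge> N1" for n
  proof
    show "F \<subseteq> Bset f c x n T" unfolding F_def Bset_def by auto
    show "Bset f c x n T \<subseteq> F"
    proof
      fix i assume i: "i \<in> Bset f c x n T"
      show "i \<in> F"
      proof (rule ccontr)
        assume "i \<notin> F"
        with i have "i \<in> {..T}-F" unfolding Bset_def by auto
        have "T \<le> M i" "noise_rate (f i) x (M i) > c" "M i \<le> n"
          using M[OF \<open>i \<in> {..T}-F\<close>] N1M[OF \<open>i \<in> {..T}-F\<close>] that by auto
        moreover have "\<forall>m. T \<le> m \<and> m \<le> n \<longrightarrow> noise_rate (f i) x m \<le> c"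
          using i unfolding Bset_def by simp
        ultimately show False by force
      qed
    qed
  qed
  have finF: "finite F" unfolding F_def by simp
  have condF: "\<forall>L\<in>f ` F. mu_low (\<Inter>(f ` F)) L \<ge> ereal r"
  proof -
    have "\<not> (\<exists>\<^sub>\<infinity>n. noise_rate La x n > c)" if "La \<in> f ` F" for La
    proof -
      from that obtain i where "i \<in> F" "La = f i" by auto
      then have "\<forall>\<^sub>F n in sequentially. \<not> noise_rate La x n > c"
        unfolding F_def eventually_sequentially by (auto simp: not_less)
      then show ?thesis by (simp add: not_frequently cofinite_eq_sequentially)
    qed
    moreover have h: "f ` F \<subseteq> range f" "finite (f ` F)" "f ` F \<noteq> {}" using finF zF by auto
    note cc = cond[rule_format, OF h en]
    ultimately show ?thesis using cc by metis
  qed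
  show ?thesis
  proof (intro exI[of _ N1] allI impI)
    fix n assume n: "N1 \<le> n"
    define S where "S = {t. t \<le> n \<and> goodt f c r x n t}"
    have TS: "T \<in> S" unfolding S_def goodt_def using BF[OF n] condF N1T n by auto
    have finS: "finite S" unfolding S_def by simp
    define tn where "tn = Max S"
    have tn: "T \<le> tn" "tn \<in> S" unfolding tn_def using TS finS by (auto intro: Max_in)
    have zB: "z \<in> Bset f c x n tn" using Bset_mono[OF tn(1), of f c x n] BF[OF n] zF by auto
    have go: "goodt f c r x n tn" using tn(2) unfolding S_def by auto
    have eq: "gen_out (gen f c r) x n = \<Inter>(f ` Bset f c x n tn) - x ` {..<n}"
      unfolding gen_out_eq tn_def S_def ..
    have "gen_out (gen f c r) x n \<subseteq> K" unfolding eq using zB z by auto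
    moreover have "ereal r \<le> mu_low (gen_out (gen f c r) x n) K"
    proof -
      have "ereal r \<le> mu_low (\<Inter>(f ` Bset f c x n tn)) K" using go zB z unfolding goodt_def by auto
      also have "\<dots> \<le> mu_low (gen_out (gen f c r) x n) K" unfolding eq
        by (rule mu_low_diff_finite) simp
      finally show ?thesis .
    qed
    ultimately show "gen_out (gen f c r) x n \<subseteq> K \<and> ereal r \<le> mu_low (gen_out (gen f c r) x n) K" ..
  qed
qed

theorem theorem6p14:
  fixes Lc :: "nat set set" and c \<rho> :: real
  assumes "collection Lc"
    and "0 < c" and "c \<le> 1" and "0 < \<rho>" and "\<rho> \<le> 1"
  shows "(\<exists>G. set_generator G \<and> generates_in_limit Lc c G \<and> achieves_lower_density Lc c \<rho> G)
    \<longleftrightarrow>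
    (\<forall>L'. L' \<subseteq> Lc \<longrightarrow> finite L' \<longrightarrow> L' \<noteq> {} \<longrightarrow>
      (\<forall>x. enumeration x \<longrightarrow>
        (\<exists>La\<in>L'. \<exists>\<^sub>\<infinity>n. noise_rate La x n > c) \<or>
        (\<forall>L\<in>L'. mu_low (\<Inter>L') L \<ge> ereal \<rho>)))"
proof
  assume "\<exists>G. set_generator G \<and> generates_in_limit Lc c G \<and> achieves_lower_density Lc c \<rho> G"
  then obtain G where gen: "generates_in_limit Lc c G" and dens: "achieves_lower_density Lc c \<rho> G"
    by blast
  show "\<forall>L'. L' \<subseteq> Lc \<longrightarrow> finite L' \<longrightarrow> L' \<noteq> {} \<longrightarrow>
      (\<forall>x. enumeration x \<longrightarrow>
        (\<exists>La\<in>L'. \<exists>\<^sub>\<infinity>n. noise_rate La x n > c) \<or>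
        (\<forall>L\<in>L'. mu_low (\<Inter>L') L \<ge> ereal \<rho>))"
  proof (intro allI impI)
    fix L' x
    assume sub: "L' \<subseteq> Lc" and fin: "finite L'" and nemp: "L' \<noteq> {}" and en: "enumeration x"
    show "(\<exists>La\<in>L'. \<exists>\<^sub>\<infinity>n. noise_rate La x n > c) \<or> (\<forall>L\<in>L'. mu_low (\<Inter>L') L \<ge> ereal \<rho>)"
    proof (cases "\<exists>La\<in>L'. \<exists>\<^sub>\<infinity>n. noise_rate La x n > c")
      case True then show ?thesis ..
    next
      case False
      have ev: "\<forall>\<^sub>F n in sequentially. noise_rate La x n \<le> c" if "La \<in> L'" for La
      proof -
        have "\<not> (\<exists>\<^sub>\<infinity>n. noise_rate La x n > c)" using False that by simp
        then have "\<forall>\<^sub>F n in sequentially. \<not> c < noise_rate La x n"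
          by (simp add: not_frequently cofinite_eq_sequentially)
        then show ?thesis by (rule eventually_mono) simp
      qed
      define x' where "x' = (if c < 1 then x else id)"
      have ne: "noisy_enum c La x'" if "La \<in> L'" for La
      proof (cases "c < 1")
        case True
        then show ?thesis unfolding x'_def using noisy_enum_consistent[OF True en ev[OF that]] by simp
      next
        case False
        have "infinite La" using assms(1) sub that unfolding collection_def language_def by blast
        then show ?thesis unfolding x'_def using noisy_enum_id[of c La] False by simp
      qed
      have "\<forall>La\<in>L'. \<exists>n0. \<forall>n\<ge>n0. gen_out G x' n \<subseteq> La"
      proof
        fix La assume La: "La \<in> L'"
        have "La \<in> Lc" using La sub by auto
        then show "\<exists>n0. \<forall>n\<ge>n0. gen_out G x' n \<subseteq> La"
          using gen ne[OF La] unfolding generates_in_limit_def by simp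
      qed
      then obtain n0 where n0: "\<forall>La\<in>L'. \<forall>n\<ge>n0 La. gen_out G x' n \<subseteq> La"
        by (rule bchoice[elim_format]) blast
      define N where "N = Max (n0 ` L')"
      have sub2: "gen_out G x' n \<subseteq> \<Inter>L'" if "n \<ge> N" for n
      proof
        fix a assume a: "a \<in> gen_out G x' n"
        show "a \<in> \<Inter>L'"
        proof
          fix La assume La: "La \<in> L'"
          have "n0 La \<le> N" unfolding N_def using fin La by simp
          moreover have "\<forall>n\<ge>n0 La. gen_out G x' n \<subseteq> La" using n0 La by blast
          ultimately have "gen_out G x' n \<subseteq> La" using that by simp
          then show "a \<in> La" using a by blast
        qed
      qed
      show ?thesis
      proof (intro disjI2 ballI)
        fix L assume L: "L \<in> L'"
        have "ereal \<rho> \<le> liminf (\<lambda>n. mu_low (gen_out G x' n) L)"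
        proof -
          have "L \<in> Lc" using L sub by auto
          then show ?thesis using dens ne[OF L] unfolding achieves_lower_density_def by simp
        qed
        also have "\<dots> \<le> liminf (\<lambda>n. mu_low (\<Inter>L') L)"
        proof (rule Liminf_mono)
          show "\<forall>\<^sub>F n in sequentially. mu_low (gen_out G x' n) L \<le> mu_low (\<Inter>L') L"
            unfolding eventually_sequentially using mu_low_mono[OF sub2] by blast
        qed
        also have "\<dots> = mu_low (\<Inter>L') L" by (simp add: Liminf_const)
        finally show "ereal \<rho> \<le> mu_low (\<Inter>L') L" .
      qed
    qed
  qed
next
  assume cond: "\<forall>L'. L' \<subseteq> Lc \<longrightarrow> finite L' \<longrightarrow> L' \<noteq> {} \<longrightarrow>
      (\<forall>x. enumeration x \<longrightarrow>
        (\<exists>La\<in>L'. \<exists>\<^sub>\<infinity>n. noise_rate La x n > c) \<or>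
        (\<forall>L\<in>L'. mu_low (\<Inter>L') L \<ge> ereal \<rho>))"
  show "\<exists>G. set_generator G \<and> generates_in_limit Lc c G \<and> achieves_lower_density Lc c \<rho> G"
  proof (cases "Lc = {}")
    case True
    then show ?thesis
      by (intro exI[of _ "\<lambda>_. {}"]) (simp add: set_generator_def generates_in_limit_def achieves_lower_density_def)
  next
    case False
    define f where "f = from_nat_into Lc"
    have rf: "range f = Lc" unfolding f_def
      using range_from_nat_into[OF False] assms(1) unfolding collection_def by blast
    have cond': "\<forall>L'. L' \<subseteq> range f \<longrightarrow> finite L' \<longrightarrow> L' \<noteq> {} \<longrightarrow>
      (\<forall>x. enumeration x \<longrightarrow>
        (\<exists>La\<in>L'. \<exists>\<^sub>\<infinity>n. noise_rate La x n > c) \<or>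
        (\<forall>L\<in>L'. mu_low (\<Inter>L') L \<ge> ereal \<rho>))" using cond rf by simp
    have key: "\<exists>N. \<forall>n\<ge>N. gen_out (gen f c \<rho>) x n \<subseteq> K \<and> ereal \<rho> \<le> mu_low (gen_out (gen f c \<rho>) x n) K"
      if "K \<in> Lc" "noisy_enum c K x" for K x
      using sufficiency[of K f c x \<rho>, OF _ that(2) assms(4) cond'] that(1) rf by simp
    show ?thesis
    proof (intro exI[of _ "gen f c \<rho>"] conjI)
      show "set_generator (gen f c \<rho>)"
        unfolding set_generator_def gen_def Let_def by auto
      show "generates_in_limit Lc c (gen f c \<rho>)"
        unfolding generates_in_limit_def
      proof (intro ballI allI impI)
        fix K x assume "K \<in> Lc" "noisy_enum c K x"
        from key[OF this] obtain N where N: "\<forall>n\<ge>N. gen_out (gen f c \<rho>) x n \<subseteq> K"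
          by blast
        then show "\<exists>n0. \<forall>n\<ge>n0. gen_out (gen f c \<rho>) x n \<subseteq> K" by blast
      qed
      show "achieves_lower_density Lc c \<rho> (gen f c \<rho>)"
        unfolding achieves_lower_density_def
      proof (intro ballI allI impI)
        fix K x assume "K \<in> Lc" "noisy_enum c K x"
        from key[OF this] obtain N where N: "\<forall>n\<ge>N. ereal \<rho> \<le> mu_low (gen_out (gen f c \<rho>) x n) K"
          by blast
        show "ereal \<rho> \<le> liminf (\<lambda>n. mu_low (gen_out (gen f c \<rho>) x n) K)"
          unfolding liminf_bounded_iff
          using N by (meson less_le_trans)
      qed
    qed
  qed
qed

end
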